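(* Let $\mathcal{P}_G$ be the set of $n$-armed bandit models whose arms are Gaussian $\mathcal{N}(\mu_i,\sigma^2)$ with $\mu_i\in[0,1]$. Let $A$ be a $T$-round algorithm that is $(\epsilon,\delta)$-PAC on $\mathcal{P}_G$ with $\delta\le1/6$. Let $c=\frac23\log\frac{1}{2\delta}$ and $\hat\Delta_i(\nu)=(\Delta_i(\nu)+\epsilon)/\sigma$. Let $\nu\in\mathcal{P}_G$ satisfy $\mu_{[1]}\le1-\epsilon$ and $\Delta_{[1]}\ge\epsilon$. Then for every $i\in[n]\setminus\{[1]\}$, $$\mathbb{P}_{A,\nu}\big(\widetilde N_{i,T}\ge c\,\hat\Delta_i(\nu)^{-2}\big)\ge\frac16.$$
   Context: Arm $[j]$ has the $j$-th highest mean; $\Delta_i=\mu_{[1]}-\mu_i$ ($i\ne[1]$), $\Delta_{[1]}=\mu_{[1]}-\mu_{[2]}$. A $T$-round algorithm chooses at each round $t$ integers $N_{i,t}\ge0$ measurably in past actions/observations, observes $N_{i,t}$ fresh i.i.d. samples from each arm, and outputs $\hat I\in[n]$ after round $T$; $\widetilde N_{i,T}=\sum_{t\le T}N_{i,t}$. It is $(\epsilon,\delta)$-PAC on a class if for every $\nu$ in the class, $\mathbb{P}_{A,\nu}(\mu_{\hat I}>\mu_{[1]}-\epsilon)\ge1-\delta$. *)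

theory Defs
  imports "HOL-Probability.Probability"
begin

type_synonym sample_table = "nat \<Rightarrow> nat \<Rightarrow> real"
  (* X i k = k-th fresh sample of arm i (arms 0..n-1) *)

type_synonym allocation = "nat \<Rightarrow> sample_table \<Rightarrow> nat \<Rightarrow> nat"
  (* alloc t X i = N_{i,t+1}: samples of arm i requested in round t+1 (rounds 0..T-1) *)

text \<open>Gaussian bandit model with means mu i and common standard deviation sigma:
  an infinite i.i.d. table of samples for every arm (stack-of-rewards model).\<close>
definition gauss_bandit :: "real \<Rightarrow> (nat \<Rightarrow> real) \<Rightarrow> sample_table measure" where
  "gauss_bandit \<sigma> \<mu> =
     (\<Pi>\<^sub>M i\<in>UNIV. \<Pi>\<^sub>M k\<in>UNIV. density lborel (normal_density (\<mu> i) \<sigma>))"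

definition table_space :: "sample_table measure" where
  "table_space = (\<Pi>\<^sub>M i\<in>UNIV. \<Pi>\<^sub>M k\<in>UNIV. (borel :: real measure))"

fun cumN :: "allocation \<Rightarrow> nat \<Rightarrow> sample_table \<Rightarrow> nat \<Rightarrow> nat" where
  "cumN A 0 X i = 0"
| "cumN A (Suc t) X i = cumN A t X i + A t X i"

text \<open>A T-round algorithm on n arms: each round's allocation is a measurable function of
  the samples observed so far only; the output is a measurable function of all samples
  observed in the T rounds and lies in the arm set.\<close>
definition batched_alg ::
  "nat \<Rightarrow> nat \<Rightarrow> allocation \<Rightarrow> (sample_table \<Rightarrow> nat) \<Rightarrow> bool" where
  "batched_alg n T A out \<longleftrightarrow>
     (\<forall>t<T. \<forall>i. (\<lambda>X. A t X i) \<in> measurable table_space (count_space UNIV)) \<and>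
     (\<forall>t<T. \<forall>X i. n \<le> i \<longrightarrow> A t X i = 0) \<and>
     (\<forall>t<T. \<forall>X Y. (\<forall>i k. k < cumN A t X i \<longrightarrow> X i k = Y i k) \<longrightarrow> A t X = A t Y) \<and>
     out \<in> measurable table_space (count_space UNIV) \<and>
     (\<forall>X. out X < n) \<and>
     (\<forall>X Y. (\<forall>i k. k < cumN A T X i \<longrightarrow> X i k = Y i k) \<longrightarrow> out X = out Y)"

definition mu_top :: "nat \<Rightarrow> (nat \<Rightarrow> real) \<Rightarrow> real" where
  "mu_top n \<mu> = Max (\<mu> ` {..<n})"

definition best_arm :: "nat \<Rightarrow> (nat \<Rightarrow> real) \<Rightarrow> nat" where
  "best_arm n \<mu> = (SOME j. j < n \<and> (\<forall>k<n. \<mu> k \<le> \<mu> j))"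

definition gap :: "nat \<Rightarrow> (nat \<Rightarrow> real) \<Rightarrow> nat \<Rightarrow> real" where
  "gap n \<mu> i = (if i = best_arm n \<mu>
      then mu_top n \<mu> - Max (\<mu> ` ({..<n} - {best_arm n \<mu>}))
      else mu_top n \<mu> - \<mu> i)"

definition PAC_gauss ::
  "nat \<Rightarrow> real \<Rightarrow> real \<Rightarrow> real \<Rightarrow> allocation \<Rightarrow> (sample_table \<Rightarrow> nat) \<Rightarrow> bool" where
  "PAC_gauss n \<sigma> \<epsilon> \<delta> A out \<longleftrightarrow>
     (\<forall>\<mu>. (\<forall>i<n. \<mu> i \<in> {0..1}) \<longrightarrow>
        measure (gauss_bandit \<sigma> \<mu>)
          {X \<in> space (gauss_bandit \<sigma> \<mu>). \<mu> (out X) > mu_top n \<mu> - \<epsilon>} \<ge> 1 - \<delta>)"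

end

theory Submission
  imports Defs
begin


lemma measurable_PiM_map:
  fixes M :: "'i \<Rightarrow> 'a measure" and N :: "'i \<Rightarrow> 'b measure"
  assumes f: "\<And>i. f i \<in> M i \<rightarrow>\<^sub>M N i"
  shows "(\<lambda>x i. f i (x i)) \<in> PiM UNIV M \<rightarrow>\<^sub>M PiM UNIV N"
proof (rule measurable_PiM_single')
  fix i :: 'i
  show "(\<lambda>x. f i (x i)) \<in> PiM UNIV M \<rightarrow>\<^sub>M N i"
    by (rule measurable_compose[OF measurable_component_singleton[of i UNIV M] f]) simp
next
  show "(\<lambda>x i. f i (x i)) \<in> space (PiM UNIV M) \<rightarrow> (\<Pi>\<^sub>E i\<in>UNIV. space (N i))"
    using f[THEN measurable_space] by (auto simp: space_PiM)
qed

lemma distr_PiM_map: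
  fixes M :: "'i \<Rightarrow> 'a measure" and N :: "'i \<Rightarrow> 'b measure"
  assumes P: "\<And>i. prob_space (M i)" and f: "\<And>i. f i \<in> M i \<rightarrow>\<^sub>M N i"
  shows "distr (PiM UNIV M) (PiM UNIV N) (\<lambda>x i. f i (x i)) = PiM UNIV (\<lambda>i. distr (M i) (N i) (f i))"
proof (rule measure_eqI_PiM_infinite)
  have meas: "(\<lambda>x i. f i (x i)) \<in> PiM UNIV M \<rightarrow>\<^sub>M PiM UNIV N"
  proof (rule measurable_PiM_single')
    fix i :: 'i
    show "(\<lambda>x. f i (x i)) \<in> PiM UNIV M \<rightarrow>\<^sub>M N i"
      by (rule measurable_compose[OF measurable_component_singleton[of i UNIV M] f]) simp
  next
    show "(\<lambda>x i. f i (x i)) \<in> space (PiM UNIV M) \<rightarrow> (\<Pi>\<^sub>E i\<in>UNIV. space (N i))"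
      using f[THEN measurable_space] by (auto simp: space_PiM)
  qed
  show "sets (distr (PiM UNIV M) (PiM UNIV N) (\<lambda>x i. f i (x i))) = sets (PiM UNIV (\<lambda>i. distr (M i) (N i) (f i)))"
    by (simp only: sets_distr) (rule sets_PiM_cong; simp)
  show "sets (PiM UNIV (\<lambda>i. distr (M i) (N i) (f i))) = sets (PiM UNIV (\<lambda>i. distr (M i) (N i) (f i)))" ..
  interpret prob_space "distr (PiM UNIV M) (PiM UNIV N) (\<lambda>x i. f i (x i))"
    by (intro prob_space.prob_space_distr prob_space_PiM P meas)
  show "finite_measure (distr (PiM UNIV M) (PiM UNIV N) (\<lambda>x i. f i (x i)))" by unfold_locales
  fix A J assume J: "finite J" "J \<subseteq> (UNIV::'i set)" and A: "\<And>i. i \<in> J \<Longrightarrow> A i \<in> sets (distr (M i) (N i) (f i))"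
  have AN: "\<And>i. i \<in> J \<Longrightarrow> A i \<in> sets (N i)" using A by simp
  have pe: "prod_emb UNIV (\<lambda>i. distr (M i) (N i) (f i)) J (Pi\<^sub>E J A) = prod_emb UNIV N J (Pi\<^sub>E J A)"
    by (simp add: prod_emb_def space_PiM)
  have pre: "(\<lambda>x i. f i (x i)) -` prod_emb UNIV N J (Pi\<^sub>E J A) \<inter> space (PiM UNIV M)
      = prod_emb UNIV M J (Pi\<^sub>E J (\<lambda>j. f j -` A j \<inter> space (M j)))"
    using f[THEN measurable_space] by (auto simp: prod_emb_def space_PiM PiE_iff)
  have "emeasure (distr (PiM UNIV M) (PiM UNIV N) (\<lambda>x i. f i (x i))) (prod_emb UNIV N J (Pi\<^sub>E J A))
     = emeasure (PiM UNIV M) (prod_emb UNIV M J (Pi\<^sub>E J (\<lambda>j. f j -` A j \<inter> space (M j))))"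
    using J by (subst emeasure_distr[OF meas]) (auto simp: pre intro!: sets_PiM_I AN)
  also have "\<dots> = (\<Prod>j\<in>J. emeasure (M j) (f j -` A j \<inter> space (M j)))"
    using J AN f by (intro emeasure_PiM_emb P) auto
  also have "\<dots> = (\<Prod>j\<in>J. emeasure (distr (M j) (N j) (f j)) (A j))"
    using AN f by (intro prod.cong refl) (simp add: emeasure_distr)
  also have "\<dots> = emeasure (PiM UNIV (\<lambda>i. distr (M i) (N i) (f i))) (prod_emb UNIV (\<lambda>i. distr (M i) (N i) (f i)) J (Pi\<^sub>E J A))"
    using J A by (intro emeasure_PiM_emb[symmetric] prob_space.prob_space_distr P f) auto
  finally show "emeasure (distr (PiM UNIV M) (PiM UNIV N) (\<lambda>x i. f i (x i))) (prod_emb UNIV (\<lambda>i. distr (M i) (N i) (f i)) J (Pi\<^sub>E J A)) =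
     emeasure (PiM UNIV (\<lambda>i. distr (M i) (N i) (f i))) (prod_emb UNIV (\<lambda>i. distr (M i) (N i) (f i)) J (Pi\<^sub>E J A))"
    by (simp add: pe)
qed

lemma PiM_density_finite:
  fixes M :: "'i \<Rightarrow> 'a measure" and g :: "'i \<Rightarrow> 'a \<Rightarrow> ennreal"
  assumes P: "\<And>i. prob_space (M i)" and J: "finite J"
    and g: "\<And>i. i \<in> J \<Longrightarrow> g i \<in> borel_measurable (M i)"
    and g1: "\<And>i. i \<in> J \<Longrightarrow> (\<integral>\<^sup>+x. g i x \<partial>M i) = 1"
  shows "PiM UNIV (\<lambda>i. if i \<in> J then density (M i) (g i) else M i) = density (PiM UNIV M) (\<lambda>x. \<Prod>i\<in>J. g i (x i))"
proof -
  define M' where "M' = (\<lambda>i. if i \<in> J then density (M i) (g i) else M i)"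
  have sM': "sets (M' i) = sets (M i)" for i by (simp add: M'_def)
  have spM': "space (M' i) = space (M i)" for i by (simp add: M'_def)
  have PM': "prob_space (M' i)" for i
  proof (cases "i \<in> J")
    case True
    have "emeasure (density (M i) (g i)) (space (M i)) = (\<integral>\<^sup>+x. g i x * indicator (space (M i)) x \<partial>M i)"
      using g[OF True] by (rule emeasure_density) auto
    also have "\<dots> = 1" using g1[OF True] by (simp cong: nn_integral_cong)
    finally show ?thesis using True by (auto simp: M'_def intro!: prob_spaceI)
  qed (simp add: M'_def P)
  interpret PP: product_prob_space M UNIV using P by (simp add: product_prob_space_def product_prob_space_axioms_def product_sigma_finite_def prob_space_imp_sigma_finite)
  have gm: "(\<lambda>x. \<Prod>i\<in>J. g i (x i)) \<in> borel_measurable (PiM UNIV M)"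
    using g by (intro borel_measurable_prod_ennreal) (auto intro: measurable_compose[OF measurable_component_singleton[of _ UNIV M]])
  have "PiM UNIV M' = density (PiM UNIV M) (\<lambda>x. \<Prod>i\<in>J. g i (x i))"
  proof (rule measure_eqI_PiM_infinite)
    show "sets (PiM UNIV M') = sets (PiM UNIV M')" ..
    show "sets (density (PiM UNIV M) (\<lambda>x. \<Prod>i\<in>J. g i (x i))) = sets (PiM UNIV M')"
      by (simp only: sets_density) (rule sets_PiM_cong; simp add: sM')
    interpret prob_space "PiM UNIV M'" by (intro prob_space_PiM PM')
    show "finite_measure (PiM UNIV M')" by unfold_locales
    fix A K assume K: "finite K" "K \<subseteq> (UNIV::'i set)" and A: "\<And>i. i \<in> K \<Longrightarrow> A i \<in> sets (M' i)"
    have AM: "\<And>i. i \<in> K \<Longrightarrow> A i \<in> sets (M i)" using A sM' by auto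
    have pe: "prod_emb UNIV M' K (Pi\<^sub>E K A) = prod_emb UNIV M K (Pi\<^sub>E K A)"
      by (simp add: prod_emb_def space_PiM spM')
    have cyl: "prod_emb UNIV M K (Pi\<^sub>E K A) \<in> sets (PiM UNIV M)"
      using K AM by (intro sets_PiM_I) auto
    define h where "h j y = (if j \<in> J then g j y else 1) * (if j \<in> K then indicator (A j) y else 1)" for j y
    have hm: "h j \<in> borel_measurable (M j)" if "j \<in> J \<union> K" for j
      using that g AM unfolding h_def by (cases "j \<in> J"; cases "j \<in> K") (auto intro!: borel_measurable_times_ennreal)
    have ind: "(\<Prod>i\<in>J. g i (x i)) * indicator (prod_emb UNIV M K (Pi\<^sub>E K A)) x = (\<Prod>j\<in>J \<union> K. h j (x j))"
      if x: "x \<in> space (PiM UNIV M)" for x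
    proof -
      have "indicator (prod_emb UNIV M K (Pi\<^sub>E K A)) x = (\<Prod>j\<in>K. indicator (A j) (x j) :: ennreal)"
      proof (cases "\<forall>j\<in>K. x j \<in> A j")
        case True
        then show ?thesis using x by (auto simp: prod_emb_def indicator_def PiE_iff space_PiM intro!: prod.neutral[symmetric])
      next
        case False
        then obtain j where "j \<in> K" "x j \<notin> A j" by auto
        then have "(\<Prod>j\<in>K. indicator (A j) (x j) :: ennreal) = 0"
          using K by (intro prod_zero) (auto intro!: bexI[of _ j] simp: indicator_def)
        then show ?thesis using False x by (auto simp: prod_emb_def indicator_def PiE_iff space_PiM)
      qed
      then show ?thesis
        using J K unfolding h_def prod.distrib
        by (simp add: prod.If_cases Int_absorb1 Int_absorb2 Int_commute)
    qed
    have "emeasure (density (PiM UNIV M) (\<lambda>x. \<Prod>i\<in>J. g i (x i))) (prod_emb UNIV M' K (Pi\<^sub>E K A))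
        = (\<integral>\<^sup>+x. (\<Prod>j\<in>J \<union> K. h j (x j)) \<partial>PiM UNIV M)"
      using cyl gm by (simp add: pe emeasure_density ind cong: nn_integral_cong)
    also have "\<dots> = (\<integral>\<^sup>+x. (\<Prod>j\<in>J \<union> K. h j (x j)) \<partial>distr (PiM UNIV M) (PiM (J \<union> K) M) (\<lambda>x. restrict x (J \<union> K)))"
    proof -
      have m1: "(\<lambda>x. restrict x (J \<union> K)) \<in> PiM UNIV M \<rightarrow>\<^sub>M PiM (J \<union> K) M"
        by (rule measurable_restrict_subset) simp
      have m2: "(\<lambda>x. \<Prod>j\<in>J \<union> K. h j (x j)) \<in> borel_measurable (PiM (J \<union> K) M)"
        using hm by (intro borel_measurable_prod_ennreal) (auto intro: measurable_compose[OF measurable_component_singleton[of _ "J \<union> K" M]])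
      have m3: "(\<lambda>x. \<Prod>j\<in>J \<union> K. h j (x j)) \<in> borel_measurable (distr (PiM UNIV M) (PiM (J \<union> K) M) (\<lambda>x. restrict x (J \<union> K)))"
        using m2 by (simp add: measurable_cong_sets[OF sets_distr refl])
      show ?thesis by (subst nn_integral_distr[OF m1 m3]) (intro nn_integral_cong prod.cong refl; simp)
    qed
    also have "\<dots> = (\<integral>\<^sup>+x. (\<Prod>j\<in>J \<union> K. h j (x j)) \<partial>PiM (J \<union> K) M)"
      using J K by (subst PP.distr_PiM_restrict_finite) auto
    also have "\<dots> = (\<Prod>j\<in>J \<union> K. integral\<^sup>N (M j) (h j))"
      using J K hm by (intro PP.product_nn_integral_prod) auto
    also have "\<dots> = (\<Prod>j\<in>K. emeasure (M' j) (A j))"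
    proof -
      have "(\<Prod>j\<in>J \<union> K. integral\<^sup>N (M j) (h j)) = (\<Prod>j\<in>K. integral\<^sup>N (M j) (h j)) * (\<Prod>j\<in>J - K. integral\<^sup>N (M j) (h j))"
        using J K by (subst prod.union_disjoint[symmetric]) (auto intro!: prod.cong)
      also have "(\<Prod>j\<in>J - K. integral\<^sup>N (M j) (h j)) = 1"
      proof (intro prod.neutral ballI)
        fix x assume "x \<in> J - K"
        then have "h x = g x" by (intro ext) (simp add: h_def)
        then show "integral\<^sup>N (M x) (h x) = 1" using g1 \<open>x \<in> J - K\<close> by simp
      qed
      also have "(\<Prod>j\<in>K. integral\<^sup>N (M j) (h j)) = (\<Prod>j\<in>K. emeasure (M' j) (A j))"
      proof (intro prod.cong refl)
        fix j assume j: "j \<in> K"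
        show "integral\<^sup>N (M j) (h j) = emeasure (M' j) (A j)"
        proof (cases "j \<in> J")
          case True
          then show ?thesis using j AM g unfolding h_def M'_def
            by (simp add: emeasure_density mult.commute)
        next
          case False
          then show ?thesis using j AM unfolding h_def M'_def by simp
        qed
      qed
      finally show ?thesis by simp
    qed
    also have "\<dots> = emeasure (PiM UNIV M') (prod_emb UNIV M' K (Pi\<^sub>E K A))"
      using K A by (intro emeasure_PiM_emb[symmetric] PM') auto
    finally show "emeasure (PiM UNIV M') (prod_emb UNIV M' K (Pi\<^sub>E K A)) =
      emeasure (density (PiM UNIV M) (\<lambda>x. \<Prod>i\<in>J. g i (x i))) (prod_emb UNIV M' K (Pi\<^sub>E K A))" ..
  qed
  then show ?thesis by (simp add: M'_def)
qed

definition G :: "real \<Rightarrow> real \<Rightarrow> real measure" where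
  "G \<sigma> m = density lborel (normal_density m \<sigma>)"
definition rr :: "real \<Rightarrow> real \<Rightarrow> real \<Rightarrow> real \<Rightarrow> real" where
  "rr \<sigma> m d x = exp ((2*d*(x - m) - d^2)/(2*\<sigma>^2))"

lemma sets_G[simp, measurable_cong]: "sets (G \<sigma> m) = sets borel" by (simp add: G_def)
lemma space_G[simp]: "space (G \<sigma> m) = UNIV" by (simp add: G_def)
lemma G_prob: "\<sigma> > 0 \<Longrightarrow> prob_space (G \<sigma> m)"
  unfolding G_def by (rule prob_space_normal_density)

lemma G_shift:
  assumes s: "\<sigma> > 0"
  shows "distr (G \<sigma> m) (G \<sigma> (m+d)) (\<lambda>x. x + d) = G \<sigma> (m+d)"
proof -
  interpret prob_space "G \<sigma> m" using G_prob[OF s] .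
  have D: "distributed (G \<sigma> m) lborel (\<lambda>x. x) (normal_density m \<sigma>)"
    unfolding distributed_def by (simp add: G_def distr_id2)
  have "distributed (G \<sigma> m) lborel (\<lambda>x. d + 1 * x) (normal_density (d + 1 * m) (\<bar>1\<bar> * \<sigma>))"
    by (rule normal_density_affine[OF D s]) simp
  then have "distr (G \<sigma> m) lborel (\<lambda>x. d + x) = G \<sigma> (m+d)"
    unfolding distributed_def by (simp add: G_def add.commute)
  moreover have "distr (G \<sigma> m) (G \<sigma> (m+d)) (\<lambda>x. x + d) = distr (G \<sigma> m) lborel (\<lambda>x. d + x)"
    by (intro distr_cong) auto
  ultimately show ?thesis by simp
qed

lemma nd_rr: "normal_density m \<sigma> x * rr \<sigma> m d x = normal_density (m+d) \<sigma> x"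
proof -
  have "exp (- (x - m)\<^sup>2 / (2 * \<sigma>\<^sup>2)) * exp ((2*d*(x - m) - d^2)/(2*\<sigma>^2)) = exp (- (x - (m+d))\<^sup>2 / (2 * \<sigma>\<^sup>2))"
    by (simp add: exp_add[symmetric] add_divide_distrib[symmetric] power2_eq_square algebra_simps)
  then show ?thesis unfolding normal_density_def rr_def by (simp add: mult.assoc)
qed

lemma G_density:
  assumes s: "\<sigma> > 0"
  shows "density (G \<sigma> m) (\<lambda>x. ennreal (rr \<sigma> m d x)) = G \<sigma> (m+d)"
proof -
  have "density (G \<sigma> m) (\<lambda>x. ennreal (rr \<sigma> m d x)) = density lborel (\<lambda>x. ennreal (normal_density m \<sigma> x) * ennreal (rr \<sigma> m d x))"
    unfolding G_def by (rule density_density_eq) (auto simp: rr_def)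
  also have "\<dots> = G \<sigma> (m+d)"
    unfolding G_def by (simp add: ennreal_mult'[symmetric] nd_rr)
  finally show ?thesis .
qed

lemma rr_int:
  assumes s: "\<sigma> > 0"
  shows "(\<integral>\<^sup>+x. ennreal (rr \<sigma> m d x) \<partial>G \<sigma> m) = 1"
proof -
  interpret prob_space "G \<sigma> (m+d)" using G_prob[OF s] .
  have "emeasure (density (G \<sigma> m) (\<lambda>x. ennreal (rr \<sigma> m d x))) UNIV = (\<integral>\<^sup>+x. ennreal (rr \<sigma> m d x) * indicator UNIV x \<partial>G \<sigma> m)"
    by (rule emeasure_density) (auto simp: rr_def)
  then show ?thesis using emeasure_space_1 by (simp add: G_density[OF s])
qed

definition innerG :: "real \<Rightarrow> real \<Rightarrow> (nat \<Rightarrow> real) measure" where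
  "innerG \<sigma> m = PiM UNIV (\<lambda>k. G \<sigma> m)"

lemma inner_prob: "\<sigma> > 0 \<Longrightarrow> prob_space (innerG \<sigma> m)"
  unfolding innerG_def by (intro prob_space_PiM G_prob)

lemma space_inner[simp]: "space (innerG \<sigma> m) = UNIV"
  by (simp add: innerG_def space_PiM)

lemma inner_moments:
  assumes s: "\<sigma> > 0"
  shows "integrable (innerG \<sigma> m) (\<lambda>x. \<Sum>k<K. (x k - m))"
    and "(\<integral>x. (\<Sum>k<K. (x k - m)) \<partial>innerG \<sigma> m) = 0"
    and "integrable (innerG \<sigma> m) (\<lambda>x. (\<Sum>k<K. (x k - m))^2)"
    and "(\<integral>x. (\<Sum>k<K. (x k - m))^2 \<partial>innerG \<sigma> m) = K * \<sigma>^2"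
proof -
  interpret prob_space "innerG \<sigma> m" using inner_prob[OF s] .
  interpret PP: product_prob_space "\<lambda>k. G \<sigma> m" UNIV
    using G_prob[OF s] by (simp add: product_prob_space_def product_prob_space_axioms_def product_sigma_finite_def prob_space_imp_sigma_finite)
  have comp: "(\<lambda>x. x k) \<in> innerG \<sigma> m \<rightarrow>\<^sub>M lborel" for k
    unfolding innerG_def by (rule measurable_compose[OF measurable_component_singleton]) auto
  have dist: "distributed (innerG \<sigma> m) lborel (\<lambda>x. x k) (normal_density m \<sigma>)" for k
  proof -
    have "distr (innerG \<sigma> m) lborel (\<lambda>x. x k) = distr (innerG \<sigma> m) (G \<sigma> m) (\<lambda>x. x k)"
      by (intro distr_cong) auto
    also have "\<dots> = G \<sigma> m" unfolding innerG_def by (rule PP.PiM_component) simp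
    finally show ?thesis unfolding distributed_def using comp by (simp add: G_def)
  qed
  have S: "distributed (innerG \<sigma> m) lborel (\<lambda>x. \<Sum>k<K. x k) (normal_density (K * m) (sqrt (K * \<sigma>^2)))"
    and SS: "K > 0" if "K > 0"
  proof -
    show "K > 0" by fact
    have ind: "indep_vars (\<lambda>k. borel) (\<lambda>k x. x k) {..<K}"
    proof (subst indep_vars_iff_distr_eq_PiM)
      show "{..<K} \<noteq> {}" using that by auto
      show "random_variable borel (\<lambda>x. x k)" for k using comp[of k] by simp
      have "distr (innerG \<sigma> m) (Pi\<^sub>M {..<K} (\<lambda>k. borel)) (\<lambda>x. \<lambda>k\<in>{..<K}. x k)
          = distr (innerG \<sigma> m) (Pi\<^sub>M {..<K} (\<lambda>k. G \<sigma> m)) (\<lambda>x. restrict x {..<K})"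
        by (intro distr_cong) (auto intro!: sets_PiM_cong simp: restrict_def)
      also have "\<dots> = Pi\<^sub>M {..<K} (\<lambda>k. G \<sigma> m)"
        unfolding innerG_def by (rule PP.distr_PiM_restrict_finite) auto
      also have "\<dots> = Pi\<^sub>M {..<K} (\<lambda>k. distr (innerG \<sigma> m) borel (\<lambda>x. x k))"
      proof (intro PiM_cong refl)
        fix k :: nat
        have "distr (innerG \<sigma> m) borel (\<lambda>x. x k) = distr (innerG \<sigma> m) (G \<sigma> m) (\<lambda>x. x k)"
          by (intro distr_cong) auto
        also have "\<dots> = G \<sigma> m" unfolding innerG_def by (rule PP.PiM_component) simp
        finally show "G \<sigma> m = distr (innerG \<sigma> m) borel (\<lambda>x. x k)" by simp
      qed
      finally show "distr (innerG \<sigma> m) (Pi\<^sub>M {..<K} (\<lambda>k. borel)) (\<lambda>x. \<lambda>k\<in>{..<K}. x k) = Pi\<^sub>M {..<K} (\<lambda>k. distr (innerG \<sigma> m) borel (\<lambda>x. x k))" .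
    qed
    have "distributed (innerG \<sigma> m) lborel (\<lambda>x. \<Sum>k<K. x k) (normal_density (\<Sum>k<K. m) (sqrt (\<Sum>k<K. \<sigma>^2)))"
      by (rule sum_indep_normal) (use that ind s dist in auto)
    then show "distributed (innerG \<sigma> m) lborel (\<lambda>x. \<Sum>k<K. x k) (normal_density (K * m) (sqrt (K * \<sigma>^2)))"
      by simp
  qed
  have eqS: "(\<Sum>k<K. (x k - m)) = (\<Sum>k<K. x k) - K * m" for x :: "nat \<Rightarrow> real"
    by (simp add: sum_subtractf)
  have A: "integrable (innerG \<sigma> m) (\<lambda>x. \<Sum>k<K. (x k - m)) \<and> (\<integral>x. (\<Sum>k<K. (x k - m)) \<partial>innerG \<sigma> m) = 0 \<and>
    integrable (innerG \<sigma> m) (\<lambda>x. (\<Sum>k<K. (x k - m))^2) \<and> (\<integral>x. (\<Sum>k<K. (x k - m))^2 \<partial>innerG \<sigma> m) = K * \<sigma>^2"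
  proof (cases "K = 0")
    case True then show ?thesis by simp
  next
    case False
    then have K: "K > 0" by simp
    note D = S[OF K]
    have sp: "sqrt (K * \<sigma>^2) > 0" using K s by simp
    have i1: "integrable (innerG \<sigma> m) (\<lambda>x. \<Sum>k<K. x k)"
      using distributed_integrable[OF D, of "\<lambda>x. x"] integrable_normal_moment_nz_1[OF sp] by simp
    have e1: "expectation (\<lambda>x. \<Sum>k<K. x k) = K * m"
      by (rule normal_distributed_expectation[OF sp D])
    have i2: "integrable (innerG \<sigma> m) (\<lambda>x. ((\<Sum>k<K. x k) - K * m)^2)"
      using distributed_integrable[OF D, of "\<lambda>x. (x - K * m)^2"] integrable_normal_moment[of "sqrt (K * \<sigma>^2)" "K*m" 2] sp by simp
    have v: "variance (\<lambda>x. \<Sum>k<K. x k) = (sqrt (K * \<sigma>^2))^2"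
      by (rule normal_distributed_variance[OF sp D])
    show ?thesis using i1 e1 i2 v prob_space unfolding eqS by (simp add: s)
  qed
  then show "integrable (innerG \<sigma> m) (\<lambda>x. \<Sum>k<K. (x k - m))"
    and "(\<integral>x. (\<Sum>k<K. (x k - m)) \<partial>innerG \<sigma> m) = 0"
    and "integrable (innerG \<sigma> m) (\<lambda>x. (\<Sum>k<K. (x k - m))^2)"
    and "(\<integral>x. (\<Sum>k<K. (x k - m))^2 \<partial>innerG \<sigma> m) = K * \<sigma>^2" by auto
qed

lemma gauss_bandit_eq: "gauss_bandit \<sigma> \<mu> = PiM UNIV (\<lambda>j. innerG \<sigma> (\<mu> j))"
  by (simp add: gauss_bandit_def innerG_def G_def)

lemma sets_gauss: "sets (gauss_bandit \<sigma> \<mu>) = sets table_space"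
  unfolding gauss_bandit_def table_space_def
  by (intro sets_PiM_cong refl) (simp_all add: sets_PiM_cong)

lemma space_gauss[simp]: "space (gauss_bandit \<sigma> \<mu>) = UNIV"
  by (simp add: gauss_bandit_eq space_PiM)

lemma gauss_prob: "\<sigma> > 0 \<Longrightarrow> prob_space (gauss_bandit \<sigma> \<mu>)"
  unfolding gauss_bandit_eq by (intro prob_space_PiM inner_prob)

definition Lr :: "real \<Rightarrow> real \<Rightarrow> real \<Rightarrow> nat \<Rightarrow> (nat \<Rightarrow> real) \<Rightarrow> ennreal" where
  "Lr \<sigma> m d K x = (\<Prod>k<K. ennreal (rr \<sigma> m d (x k)))"

lemma Lr_meas: "Lr \<sigma> m d K \<in> borel_measurable (innerG \<sigma> m')"
  unfolding Lr_def rr_def innerG_def by measurable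

lemma change_measure:
  fixes \<sigma> d :: real and \<mu> :: "nat \<Rightarrow> real" and i K :: nat and E :: "sample_table set"
  assumes s: "\<sigma> > 0" and E: "E \<in> sets table_space"
    and inv: "\<And>X. (\<lambda>j. if j = i then (\<lambda>k. if k < K then X i k else X i k + d) else X j) \<in> E \<longleftrightarrow> X \<in> E"
  shows "emeasure (gauss_bandit \<sigma> (\<mu>(i := \<mu> i + d))) E = (\<integral>\<^sup>+X. Lr \<sigma> (\<mu> i) d K (X i) * indicator E X \<partial>gauss_bandit \<sigma> \<mu>)"
proof -
  define \<mu>' where "\<mu>' = \<mu>(i := \<mu> i + d)"
  have innerK: "density (innerG \<sigma> (\<mu> i)) (Lr \<sigma> (\<mu> i) d K) = PiM UNIV (\<lambda>k. if k \<in> {..<K} then G \<sigma> ((\<mu> i)+d) else G \<sigma> (\<mu> i))"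
  proof -
    have "PiM UNIV (\<lambda>k. if k \<in> {..<K} then density (G \<sigma> (\<mu> i)) (\<lambda>x. ennreal (rr \<sigma> (\<mu> i) d x)) else G \<sigma> (\<mu> i))
       = density (PiM UNIV (\<lambda>k. G \<sigma> (\<mu> i))) (\<lambda>x. \<Prod>k\<in>{..<K}. ennreal (rr \<sigma> (\<mu> i) d (x k)))"
      by (rule PiM_density_finite) (auto simp: G_prob s rr_int, simp add: rr_def)
    moreover have "(\<lambda>k. if k \<in> {..<K} then density (G \<sigma> (\<mu> i)) (\<lambda>x. ennreal (rr \<sigma> (\<mu> i) d x)) else G \<sigma> (\<mu> i))
        = (\<lambda>k. if k \<in> {..<K} then G \<sigma> ((\<mu> i)+d) else G \<sigma> (\<mu> i))"
      unfolding G_density[OF s, of "\<mu> i" d] ..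
    ultimately show ?thesis by (simp add: innerG_def Lr_def[abs_def])
  qed
  have Lr1: "(\<integral>\<^sup>+x. Lr \<sigma> (\<mu> j) d K x \<partial>innerG \<sigma> (\<mu> j)) = 1" if "j = i" for j
  proof -
    interpret prob_space "PiM UNIV (\<lambda>k. if k \<in> {..<K} then G \<sigma> ((\<mu> i)+d) else G \<sigma> (\<mu> i))"
      by (intro prob_space_PiM) (simp add: G_prob s)
    have "emeasure (density (innerG \<sigma> (\<mu> i)) (Lr \<sigma> (\<mu> i) d K)) UNIV = (\<integral>\<^sup>+x. Lr \<sigma> (\<mu> i) d K x * indicator UNIV x \<partial>innerG \<sigma> (\<mu> i))"
      using sets.top[of "innerG \<sigma> (\<mu> i)"] by (intro emeasure_density) (auto simp: Lr_meas)
    moreover have sp: "space (PiM UNIV (\<lambda>k. if k \<in> {..<K} then G \<sigma> ((\<mu> i)+d) else G \<sigma> (\<mu> i))) = UNIV"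
      by (auto simp: space_PiM PiE_def extensional_def split: if_splits)
    ultimately have "integral\<^sup>N (innerG \<sigma> (\<mu> i)) (Lr \<sigma> (\<mu> i) d K) = 1" using emeasure_space_1 by (simp add: innerK)
    then show ?thesis using that by (simp add:)
  qed
  define F where "F j = (if j \<in> {i} then density (innerG \<sigma> (\<mu> j)) (Lr \<sigma> (\<mu> j) d K) else innerG \<sigma> (\<mu> j))" for j
  have nuK: "PiM UNIV F = density (gauss_bandit \<sigma> \<mu>) (\<lambda>X. \<Prod>j\<in>{i}. Lr \<sigma> (\<mu> j) d K (X j))"
    unfolding F_def gauss_bandit_eq by (rule PiM_density_finite) (auto simp: inner_prob s Lr_meas Lr1)
  have Fi: "F i = PiM UNIV (\<lambda>k. if k \<in> {..<K} then G \<sigma> ((\<mu> i)+d) else G \<sigma> (\<mu> i))"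
    by (simp add: F_def innerK)
  have PF: "prob_space (F j)" for j
  proof (cases "j = i")
    case True
    then show ?thesis unfolding True Fi by (intro prob_space_PiM) (simp add: G_prob s)
  qed (simp add: F_def inner_prob s)
  define g where "g k = (if k < K then (\<lambda>y::real. y) else (\<lambda>y. y + d))" for k
  define f where "f j = (if j = i then (\<lambda>x k. g k (x k)) else (\<lambda>x::nat\<Rightarrow>real. x))" for j
  have gm: "g k \<in> G \<sigma> (\<mu> i) \<rightarrow>\<^sub>M G \<sigma> ((\<mu> i)+d)" "g k \<in> G \<sigma> ((\<mu> i)+d) \<rightarrow>\<^sub>M G \<sigma> ((\<mu> i)+d)" for k
    by (auto simp: g_def measurable_cong_sets[OF sets_G sets_G])
  have fm: "f j \<in> F j \<rightarrow>\<^sub>M innerG \<sigma> (\<mu>' j)" for j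
  proof (cases "j = i")
    case True
    have "(\<lambda>x k. g k (x k)) \<in> PiM UNIV (\<lambda>k. if k \<in> {..<K} then G \<sigma> ((\<mu> i)+d) else G \<sigma> (\<mu> i)) \<rightarrow>\<^sub>M PiM UNIV (\<lambda>k. G \<sigma> ((\<mu> i)+d))"
      by (rule measurable_PiM_map) (simp add: gm)
    then show ?thesis using True by (simp add: Fi f_def innerG_def \<mu>'_def)
  next
    case False
    then show ?thesis by (simp add: f_def F_def \<mu>'_def)
  qed
  have dF: "distr (F j) (innerG \<sigma> (\<mu>' j)) (f j) = innerG \<sigma> (\<mu>' j)" for j
  proof (cases "j = i")
    case True
    have "distr (PiM UNIV (\<lambda>k. if k \<in> {..<K} then G \<sigma> ((\<mu> i)+d) else G \<sigma> (\<mu> i))) (PiM UNIV (\<lambda>k. G \<sigma> ((\<mu> i)+d))) (\<lambda>x k. g k (x k))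
        = PiM UNIV (\<lambda>k. distr (if k \<in> {..<K} then G \<sigma> ((\<mu> i)+d) else G \<sigma> (\<mu> i)) (G \<sigma> ((\<mu> i)+d)) (g k))"
      by (rule distr_PiM_map) (simp_all add: G_prob s gm)
    also have "\<dots> = PiM UNIV (\<lambda>k. G \<sigma> ((\<mu> i)+d))"
      by (intro PiM_cong refl) (auto simp: g_def G_shift[OF s] distr_id)
    finally show ?thesis using True by (simp add: Fi f_def innerG_def \<mu>'_def)
  next
    case False
    then show ?thesis by (simp add: f_def F_def \<mu>'_def distr_id)
  qed
  have nu': "distr (PiM UNIV F) (gauss_bandit \<sigma> \<mu>') (\<lambda>X j. f j (X j)) = gauss_bandit \<sigma> \<mu>'"
    unfolding gauss_bandit_eq[of _ \<mu>'] by (subst distr_PiM_map[OF PF fm]) (simp add: dF)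
  have Rm: "(\<lambda>X j. f j (X j)) \<in> PiM UNIV F \<rightarrow>\<^sub>M gauss_bandit \<sigma> \<mu>'"
    unfolding gauss_bandit_eq[of _ \<mu>'] by (rule measurable_PiM_map[OF fm])
  have sF: "sets (PiM UNIV F) = sets table_space"
    using nuK sets_gauss by (metis sets_density)
  have pre: "(\<lambda>X j. f j (X j)) -` E \<inter> space (PiM UNIV F) = E"
  proof -
    have "(\<lambda>j. f j (X j)) = (\<lambda>j. if j = i then (\<lambda>k. if k < K then X i k else X i k + d) else X j)" for X
      by (auto simp: f_def g_def fun_eq_iff)
    moreover have "space (PiM UNIV F) = UNIV" by (simp add: nuK)
    ultimately show ?thesis using inv by auto
  qed
  have "emeasure (gauss_bandit \<sigma> \<mu>') E = emeasure (PiM UNIV F) E"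
    using E sets_gauss[of \<sigma> \<mu>'] by (subst nu'[symmetric]) (simp add: emeasure_distr[OF Rm] pre)
  also have "\<dots> = (\<integral>\<^sup>+X. Lr \<sigma> (\<mu> i) d K (X i) * indicator E X \<partial>gauss_bandit \<sigma> \<mu>)"
  proof -
    have Lm: "(\<lambda>X. Lr \<sigma> (\<mu> i) d K (X i)) \<in> borel_measurable (gauss_bandit \<sigma> \<mu>)"
      unfolding gauss_bandit_eq
      by (rule measurable_compose[OF measurable_component_singleton[of i UNIV] Lr_meas]) simp
    show ?thesis unfolding nuK using E sets_gauss[of \<sigma> \<mu>] by (simp add: emeasure_density[OF Lm])
  qed
  finally show ?thesis by (simp add: \<mu>'_def)
qed

lemma pw:
  fixes a w z q :: real
  assumes q: "q > 0"
  shows "exp a * ((if b then 1 else 0) * (1 - a - w) + z/2 - z^2/(4 * q) - q/4) \<le> (if b then 1 else 0) * exp (z - w)"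
proof -
  have q1: "z/2 - z^2/(4 * q) - q/4 \<le> 0"
  proof -
    have "0 \<le> (z - q)^2" by simp
    then have "0 \<le> (z^2 - 2 * z * q + q^2) / (4 * q)" using q by (simp add: power2_diff)
    then show ?thesis using q by (simp add: field_simps power2_eq_square)
  qed
  have q2: "z/2 - z^2/(4 * q) - q/4 \<le> z"
  proof -
    have "0 \<le> (z + q)^2" by simp
    then have "0 \<le> (z^2 + 2 * z * q + q^2) / (4 * q)" using q by (simp add: power2_sum)
    then show ?thesis using q by (simp add: field_simps power2_eq_square)
  qed
  show ?thesis
  proof (cases b)
    case True
    have "1 + (z - w - a) \<le> exp (z - w - a)" by (rule exp_ge_add_one_self)
    then have "exp a * (1 + (z - w - a)) \<le> exp a * exp (z - w - a)" by simp
    also have "exp a * exp (z - w - a) = exp (z - w)" by (simp add: exp_add[symmetric])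
    finally have "exp a * (1 + (z - w - a)) \<le> exp (z - w)" .
    moreover have "exp a * ((1 - a - w) + z/2 - z^2/(4 * q) - q/4) \<le> exp a * (1 + (z - w - a))"
      by (intro mult_left_mono) (use q2 in linarith, simp)
    ultimately have "exp a * ((1 - a - w) + z/2 - z^2/(4 * q) - q/4) \<le> exp (z - w)" by linarith
    then show ?thesis using True by simp
  next
    case False
    then show ?thesis using q1 by (simp add: mult_nonneg_nonpos)
  qed
qed

lemma lower_bound:
  fixes \<sigma> d a q :: real and \<mu> :: "nat \<Rightarrow> real" and i K :: nat and E :: "sample_table set"
  assumes s: "\<sigma> > 0" and q: "q > 0" and E: "E \<in> sets table_space"
    and inv: "\<And>X. (\<lambda>j. if j = i then (\<lambda>k. if k < K then X i k else X i k + d) else X j) \<in> E \<longleftrightarrow> X \<in> E"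
  shows "exp a * (measure (gauss_bandit \<sigma> \<mu>) E * (1 - a - (K*d^2/\<sigma>^2)/2) - (K*d^2/\<sigma>^2)/(4 * q) - q/4)
     \<le> measure (gauss_bandit \<sigma> (\<mu>(i := \<mu> i + d))) E"
proof -
  define \<nu> where "\<nu> = gauss_bandit \<sigma> \<mu>"
  define \<nu>' where "\<nu>' = gauss_bandit \<sigma> (\<mu>(i := \<mu> i + d))"
  interpret prob_space \<nu> unfolding \<nu>_def by (rule gauss_prob[OF s])
  interpret P': prob_space \<nu>' unfolding \<nu>'_def by (rule gauss_prob[OF s])
  define v where "v = K*d^2/\<sigma>^2"
  define S where "S x = (\<Sum>k<K. (x k - \<mu> i))" for x :: "nat \<Rightarrow> real"
  define Z where "Z X = d/\<sigma>^2 * S (X i)" for X :: sample_table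
  have Em: "E \<in> sets \<nu>" using E sets_gauss \<nu>_def by simp
  have Lr_eq: "Lr \<sigma> (\<mu> i) d K x = ennreal (exp (d/\<sigma>^2 * S x - v/2))" for x
  proof -
    have "Lr \<sigma> (\<mu> i) d K x = ennreal (\<Prod>k<K. rr \<sigma> (\<mu> i) d (x k))"
      unfolding Lr_def by (rule prod_ennreal) (simp add: rr_def)
    also have "(\<Prod>k<K. rr \<sigma> (\<mu> i) d (x k)) = exp (\<Sum>k<K. (2*d*(x k - \<mu> i) - d^2)/(2*\<sigma>^2))"
      unfolding rr_def by (simp add: exp_sum)
    also have "(\<Sum>k<K. (2*d*(x k - \<mu> i) - d^2)/(2*\<sigma>^2)) = (\<Sum>k<K. d/\<sigma>^2 * (x k - \<mu> i) - d^2/(2*\<sigma>^2))"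
      using s by (intro sum.cong refl) (simp add: field_simps power2_eq_square)
    also have "\<dots> = d/\<sigma>^2 * S x - v/2"
      by (simp only: sum_subtractf sum_distrib_left[symmetric] sum_constant S_def card_lessThan) (simp add: v_def field_simps)
    finally show ?thesis .
  qed
  have comp: "(\<lambda>X. X i) \<in> \<nu> \<rightarrow>\<^sub>M innerG \<sigma> (\<mu> i)"
    unfolding \<nu>_def gauss_bandit_eq by (rule measurable_component_singleton) simp
  have Sm: "S \<in> borel_measurable (innerG \<sigma> (\<mu> i))"
    unfolding S_def innerG_def by measurable
  have Zm: "Z \<in> borel_measurable \<nu>"
    unfolding Z_def by (intro borel_measurable_times measurable_compose[OF comp Sm]) simp
  define f where "f X = indicator E X * exp (Z X - v/2)" for X
  have fm: "f \<in> borel_measurable \<nu>"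
    unfolding f_def using Zm Em by measurable
  have meq: "emeasure \<nu>' E = (\<integral>\<^sup>+X. ennreal (f X) \<partial>\<nu>)"
    unfolding \<nu>'_def change_measure[OF s E inv] \<nu>_def
    by (intro nn_integral_cong) (simp add: Lr_eq f_def Z_def \<nu>_def split: split_indicator)
  have fin: "(\<integral>\<^sup>+X. ennreal (f X) \<partial>\<nu>) < \<infinity>"
    using meq P'.emeasure_finite[of E] by (simp add: less_top)
  have fint: "integrable \<nu> f"
    by (rule integrableI_nonneg[OF fm]) (use fin in \<open>auto simp: f_def\<close>)
  have mE': "measure \<nu>' E = (\<integral>X. f X \<partial>\<nu>)"
  proof -
    have "emeasure \<nu>' E = ennreal (\<integral>X. f X \<partial>\<nu>)"
    proof -
      have "AE x in \<nu>. 0 \<le> f x" by (simp add: f_def)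
      then show ?thesis using meq nn_integral_eq_integral[OF fint] by simp
    qed
    moreover have "0 \<le> (\<integral>X. f X \<partial>\<nu>)" by (rule integral_nonneg_AE) (simp add: f_def)
    ultimately show ?thesis
      by (simp add: measure_def)
  qed
  have dcomp: "distr \<nu> (innerG \<sigma> (\<mu> i)) (\<lambda>X. X i) = innerG \<sigma> (\<mu> i)"
    unfolding \<nu>_def gauss_bandit_eq by (rule distr_PiM_component) (simp_all add: inner_prob s)
  have S2m: "(\<lambda>x. (S x)^2) \<in> borel_measurable (innerG \<sigma> (\<mu> i))" using Sm by measurable
  have iS: "integrable \<nu> (\<lambda>X. S (X i))"
    using integrable_distr_eq[OF comp Sm] inner_moments(1)[OF s, of "\<mu> i" K] by (simp add: dcomp S_def[abs_def])
  have eS: "(\<integral>X. S (X i) \<partial>\<nu>) = 0"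
    using integral_distr[OF comp Sm] inner_moments(2)[OF s, of "\<mu> i" K] by (simp add: dcomp S_def[abs_def])
  have iS2: "integrable \<nu> (\<lambda>X. (S (X i))^2)"
    using integrable_distr_eq[OF comp S2m] inner_moments(3)[OF s, of "\<mu> i" K] by (simp add: dcomp S_def[abs_def])
  have eS2: "(\<integral>X. (S (X i))^2 \<partial>\<nu>) = K * \<sigma>^2"
    using integral_distr[OF comp S2m] inner_moments(4)[OF s, of "\<mu> i" K] by (simp add: dcomp S_def[abs_def])
  define h where "h X = exp a * ((if X \<in> E then 1 else 0) * (1 - a - v/2) + Z X/2 - (Z X)^2/(4 * q) - q/4)" for X
  have h_eq: "h X = (exp a * (1 - a - v/2)) * indicator E X + (exp a * d / (2*\<sigma>^2)) * S (X i)
      - (exp a * (d/\<sigma>^2)^2 / (4 * q)) * (S (X i))^2 - exp a * q / 4" for X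
    unfolding h_def Z_def by (simp add: indicator_def field_simps power2_eq_square)
  have iE: "integrable \<nu> (indicator E :: _ \<Rightarrow> real)" using Em by (intro integrable_real_indicator) (simp_all add: less_top[symmetric])
  have hint: "integrable \<nu> h" unfolding h_eq[abs_def] using iE iS iS2 by simp
  have "(\<integral>X. h X \<partial>\<nu>) = (exp a * (1 - a - v/2)) * measure \<nu> E + (exp a * d / (2*\<sigma>^2)) * 0
      - (exp a * (d/\<sigma>^2)^2 / (4 * q)) * (K * \<sigma>^2) - exp a * q / 4"
    unfolding h_eq[abs_def] using iE iS iS2 eS eS2 Em prob_space by simp
  also have "\<dots> = exp a * (measure \<nu> E * (1 - a - v/2) - v/(4 * q) - q/4)"
    using s unfolding v_def by (simp add: field_simps power2_eq_square)
  finally have hval: "(\<integral>X. h X \<partial>\<nu>) = exp a * (measure \<nu> E * (1 - a - v/2) - v/(4 * q) - q/4)" .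
  have "(\<integral>X. h X \<partial>\<nu>) \<le> (\<integral>X. f X \<partial>\<nu>)"
  proof (intro integral_mono hint fint)
    fix X show "h X \<le> f X"
      using pw[OF q, where a=a and b="X \<in> E" and w="v/2" and z="Z X"] unfolding h_def f_def by (cases "X \<in> E") (simp_all add: indicator_def)
  qed
  then show ?thesis using hval mE' by (simp add: \<nu>_def \<nu>'_def v_def)
qed



lemma arith_final:
  fixes \<delta> c v p a :: real
  assumes d0: "0 < \<delta>" and d6: "\<delta> \<le> 1/6" and c: "c = 2/3 * ln (1/(2*\<delta>))"
    and v0: "0 \<le> v" and vc: "v \<le> c" and p: "p > 2/3"
    and a: "a = -c/2 - 3 * sqrt c/4"
    and H: "exp a * (p * (1 - a - v/2) - v/(4 * sqrt c) - sqrt c/4) \<le> \<delta>"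
  shows False
proof -
  define r where "r = sqrt c"
  have "ln 3 \<le> ln (1/(2*\<delta>))" using d0 d6 by (subst ln_le_cancel_iff) (auto simp: field_simps)
  moreover have "1 \<le> ln (3::real)" using exp_le by (subst ln_ge_iff) auto
  ultimately have c1: "c \<ge> 2/3" using c by simp
  have r2: "r^2 = c" using c1 by (simp add: r_def)
  have r0: "r > 0" using c1 by (simp add: r_def)
  have r34: "r \<ge> 3/4"
  proof (rule ccontr)
    assume "\<not> r \<ge> 3/4"
    then have "r^2 < (3/4)^2" using r0 by (intro power_strict_mono) auto
    then show False using r2 c1 by (simp add: power2_eq_square)
  qed
  have b1: "1 - a - v/2 \<ge> 1 + 3*r/4" using a vc r_def by simp
  have b2: "p * (1 - a - v/2) \<ge> 2/3 * (1 + 3*r/4)"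
  proof -
    have "2/3 * (1 + 3*r/4) \<le> p * (1 + 3*r/4)" using p r0 by (intro mult_right_mono) auto
    also have "\<dots> \<le> p * (1 - a - v/2)" using b1 p by (intro mult_left_mono) auto
    finally show ?thesis .
  qed
  have b3: "v/(4 * r) \<le> r/4"
  proof -
    have "v/(4 * r) \<le> c/(4 * r)" using vc r0 by (intro divide_right_mono) auto
    also have "c/(4 * r) = r/4" using r2 r0 by (simp add: field_simps power2_eq_square)
    finally show ?thesis .
  qed
  have "2/3 \<le> p * (1 - a - v/2) - v/(4 * r) - r/4" using b2 b3 by simp
  then have "exp a * (2/3) \<le> exp a * (p * (1 - a - v/2) - v/(4 * r) - r/4)"
    by (intro mult_left_mono) auto
  then have "exp a * (2/3) \<le> \<delta>" using H unfolding r_def by linarith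
  moreover have dexp: "\<delta> = exp (- (3/2 * c)) / 2"
  proof -
    have "3/2 * c = ln (1/(2*\<delta>))" using c by simp
    then have "exp (3/2 * c) = 1/(2*\<delta>)" using d0 by simp
    then show ?thesis using d0 by (simp add: exp_minus field_simps)
  qed
  ultimately have "exp a * (2/3) \<le> exp (- (3/2 * c)) / 2" by simp
  then have "exp a * (4/3) \<le> exp (- (3/2 * c))" by simp
  moreover have "exp (- (3/2 * c)) = exp a * exp (3*r/4 - c)"
    by (simp add: exp_add[symmetric] a r_def)
  moreover have "3*r/4 - c \<le> 0"
  proof -
    have "0 \<le> r * (r - 3/4)" using r0 r34 by simp
    then show ?thesis using r2 by (simp add: power2_eq_square algebra_simps)
  qed
  ultimately have "exp a * (4/3) \<le> exp a * 1"
    by (metis exp_le_one_iff mult_left_mono exp_ge_zero order_trans)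
  then show False by simp
qed



lemma cumN_mono: "t \<le> T \<Longrightarrow> cumN A t X i \<le> cumN A T X i"
  by (induction T rule: dec_induct) auto

lemma cumN_agree:
  assumes alg: "batched_alg n T A out"
    and agr: "\<And>j k. j \<noteq> i \<or> k < K \<Longrightarrow> X j k = Y j k"
    and NK: "cumN A T X i \<le> K"
  shows "cumN A T Y i = cumN A T X i \<and> out Y = out X"
proof -
  have c3: "\<forall>t<T. \<forall>X Y. (\<forall>i k. k < cumN A t X i \<longrightarrow> X i k = Y i k) \<longrightarrow> A t X = A t Y"
    and c6: "\<forall>X Y. (\<forall>i k. k < cumN A T X i \<longrightarrow> X i k = Y i k) \<longrightarrow> out X = out Y"
    using alg unfolding batched_alg_def by simp_all
  have step: "\<forall>j k. k < cumN A t X j \<longrightarrow> X j k = Y j k" if "t \<le> T" for t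
  proof (intro allI impI)
    fix j k assume k: "k < cumN A t X j"
    show "X j k = Y j k"
    proof (cases "j = i")
      case True
      then have "k < K" using k cumN_mono[OF that, of A X i] NK by simp
      then show ?thesis using agr by auto
    qed (use agr in auto)
  qed
  have "t \<le> T \<Longrightarrow> (\<lambda>j. cumN A t Y j) = (\<lambda>j. cumN A t X j)" for t
  proof (induction t)
    case 0 then show ?case by simp
  next
    case (Suc t)
    then have tT: "t < T" by simp
    have "A t X = A t Y"
      using c3 step[of t] tT by simp
    then show ?case using Suc by (simp add: fun_eq_iff)
  qed
  then have "(\<lambda>j. cumN A T Y j) = (\<lambda>j. cumN A T X j)" by simp
  moreover have "out X = out Y" using c6 step[of T] by simp
  ultimately show ?thesis by (simp add: fun_eq_iff)
qed

lemma cumN_meas: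
  assumes alg: "batched_alg n T A out" and t: "t \<le> T"
  shows "(\<lambda>X. real (cumN A t X i)) \<in> borel_measurable table_space"
  using t
proof (induction t)
  case 0 then show ?case by simp
next
  case (Suc t)
  have "(\<lambda>X. A t X i) \<in> table_space \<rightarrow>\<^sub>M count_space UNIV" using alg Suc unfolding batched_alg_def by simp
  then have "(\<lambda>X. real (A t X i)) \<in> borel_measurable table_space"
    by (rule measurable_compose) simp
  then show ?case using Suc by simp
qed




theorem mainTheorem12:
  fixes n T :: nat and \<sigma> \<epsilon> \<delta> :: real
    and A :: allocation and out :: "sample_table \<Rightarrow> nat" and \<mu> :: "nat \<Rightarrow> real" and i :: nat
  assumes "\<sigma> > 0" and "\<epsilon> > 0" and "0 < \<delta>" and "\<delta> \<le> 1/6"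
    and "batched_alg n T A out"
    and "PAC_gauss n \<sigma> \<epsilon> \<delta> A out"
    and "\<forall>j<n. \<mu> j \<in> {0..1}"
    and "mu_top n \<mu> \<le> 1 - \<epsilon>"
    and "gap n \<mu> (best_arm n \<mu>) \<ge> \<epsilon>"
    and "i < n" and "i \<noteq> best_arm n \<mu>"
  shows "measure (gauss_bandit \<sigma> \<mu>)
           {X \<in> space (gauss_bandit \<sigma> \<mu>).
              real (cumN A T X i) \<ge> (2/3 * ln (1 / (2 * \<delta>))) * ((gap n \<mu> i + \<epsilon>) / \<sigma>) powi (-2)}
         \<ge> 1/6"
proof -
  note s = assms(1) and alg = assms(5)
  define \<nu> where "\<nu> = gauss_bandit \<sigma> \<mu>"
  interpret prob_space \<nu> using gauss_prob[OF s] \<nu>_def by simp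
  define best where "best = best_arm n \<mu>"
  have i_in: "i \<in> {..<n} - {best}" using assms(10,11) best_def by simp
  have muiMax2: "\<mu> i \<le> Max (\<mu> ` ({..<n} - {best}))" using i_in by (intro Max_ge) auto
  have gapb: "gap n \<mu> best = mu_top n \<mu> - Max (\<mu> ` ({..<n} - {best}))" by (simp add: gap_def best_def)
  have mui_le: "\<mu> i \<le> mu_top n \<mu> - \<epsilon>" using assms(9) gapb muiMax2 best_def by simp
  have mu_le_top: "\<And>j. j < n \<Longrightarrow> \<mu> j \<le> mu_top n \<mu>" unfolding mu_top_def by (intro Max_ge) auto
  define d where "d = gap n \<mu> i + \<epsilon>"
  have d_eq: "d = mu_top n \<mu> - \<mu> i + \<epsilon>" using assms(11) by (simp add: d_def gap_def)
  have dpos: "d > 0" using d_eq mu_le_top[OF assms(10)] assms(2) by simp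
  define c where "c = 2/3 * ln (1/(2*\<delta>))"
  have c_pos: "c > 0"
  proof -
    have "1 < 1/(2*\<delta>)" using assms(3,4) by (simp add: field_simps)
    then show ?thesis by (simp add: c_def ln_gt_zero)
  qed
  define \<theta> where "\<theta> = (2/3 * ln (1 / (2 * \<delta>))) * ((gap n \<mu> i + \<epsilon>) / \<sigma>) powi (-2)"
  have \<theta>_eq: "\<theta> = c * \<sigma>^2 / d^2"
    unfolding \<theta>_def c_def d_def[symmetric] by (simp add: power_int_minus field_simps)
  have \<theta>pos: "\<theta> > 0" using \<theta>_eq c_pos dpos s by simp
  define K where "K = nat \<lceil>\<theta>\<rceil> - 1"
  have NK: "real N < \<theta> \<longleftrightarrow> N \<le> K" for N :: nat
    unfolding K_def using \<theta>pos by linarith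
  have Kth: "real K < \<theta>" using NK[of K] by simp
  have v_le: "K * d^2/\<sigma>^2 \<le> c"
  proof -
    have "K * d^2 \<le> c * \<sigma>^2" using Kth \<theta>_eq dpos by (simp add: field_simps)
    then show ?thesis using s by (simp add: field_simps)
  qed
  have v_ge: "0 \<le> K * d^2/\<sigma>^2" by simp
  have out_m: "out \<in> \<nu> \<rightarrow>\<^sub>M count_space UNIV"
    using alg unfolding batched_alg_def \<nu>_def by (simp add: measurable_cong_sets[OF sets_gauss refl])
  have out_ev: "{X \<in> space \<nu>. P (out X)} \<in> events" for P
  proof -
    have "{X \<in> space \<nu>. P (out X)} = out -` {j. P j} \<inter> space \<nu>" by auto
    then show ?thesis using measurable_sets[OF out_m, of "{j. P j}"] by simp
  qed
  have N_m: "(\<lambda>X. real (cumN A T X i)) \<in> borel_measurable \<nu>"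
    using cumN_meas[OF alg order_refl, of i] unfolding \<nu>_def by (simp add: measurable_cong_sets[OF sets_gauss refl])
  define E where "E = {X. cumN A T X i \<le> K \<and> out X \<noteq> i}"
  have E_ev: "E \<in> events"
  proof -
    have "E = {X \<in> space \<nu>. real (cumN A T X i) \<le> real K} \<inter> {X \<in> space \<nu>. out X \<noteq> i}"
      by (auto simp: E_def \<nu>_def)
    moreover have "{X \<in> space \<nu>. real (cumN A T X i) \<le> real K} \<in> events" using N_m by measurable
    ultimately show ?thesis using out_ev by simp
  qed
  have E_sets: "E \<in> sets table_space" using E_ev sets_gauss \<nu>_def by simp
  have inv: "(\<lambda>j. if j = i then (\<lambda>k. if k < K then X i k else X i k + d) else X j) \<in> E \<longleftrightarrow> X \<in> E" for X
  proof -
    define RX where "RX = (\<lambda>j. if j = i then (\<lambda>k. if k < K then X i k else X i k + d) else X j)"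
    have agr1: "\<And>j k. j \<noteq> i \<or> k < K \<Longrightarrow> X j k = RX j k" by (auto simp: RX_def)
    have agr2: "\<And>j k. j \<noteq> i \<or> k < K \<Longrightarrow> RX j k = X j k" by (auto simp: RX_def)
    show ?thesis unfolding RX_def[symmetric]
    proof
      assume "RX \<in> E"
      then show "X \<in> E" using cumN_agree[OF alg agr2] by (auto simp: E_def)
    next
      assume "X \<in> E"
      then show "RX \<in> E" using cumN_agree[OF alg agr1] by (auto simp: E_def)
    qed
  qed
  define a where "a = -c/2 - 3 * sqrt c/4"
  define \<mu>' where "\<mu>' = \<mu>(i := \<mu> i + d)"
  have LB: "exp a * (measure \<nu> E * (1 - a - (K*d^2/\<sigma>^2)/2) - (K*d^2/\<sigma>^2)/(4 * sqrt c) - sqrt c/4)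
     \<le> measure (gauss_bandit \<sigma> \<mu>') E"
    unfolding \<nu>_def \<mu>'_def using c_pos by (intro lower_bound[OF s _ E_sets inv]) simp
  have pac1: "measure \<nu> {X \<in> space \<nu>. \<mu> (out X) > mu_top n \<mu> - \<epsilon>} \<ge> 1 - \<delta>"
    using assms(6,7) unfolding PAC_gauss_def \<nu>_def by blast
  have OutI: "measure \<nu> {X \<in> space \<nu>. out X = i} \<le> \<delta>"
  proof -
    have "{X \<in> space \<nu>. out X = i} \<subseteq> space \<nu> - {X \<in> space \<nu>. \<mu> (out X) > mu_top n \<mu> - \<epsilon>}"
      using mui_le by auto
    then have "measure \<nu> {X \<in> space \<nu>. out X = i} \<le> measure \<nu> (space \<nu> - {X \<in> space \<nu>. \<mu> (out X) > mu_top n \<mu> - \<epsilon>})"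
      by (intro finite_measure_mono) (auto intro: out_ev)
    also have "\<dots> = 1 - measure \<nu> {X \<in> space \<nu>. \<mu> (out X) > mu_top n \<mu> - \<epsilon>}"
      by (rule prob_compl) (rule out_ev)
    finally show ?thesis using pac1 by simp
  qed
  interpret P': prob_space "gauss_bandit \<sigma> \<mu>'" using gauss_prob[OF s] .
  have mu'_in: "\<forall>j<n. \<mu>' j \<in> {0..1}"
    using assms(7,8,2) d_eq mu_le_top[OF assms(10)] by (auto simp: \<mu>'_def)
  have pac2: "measure (gauss_bandit \<sigma> \<mu>') {X \<in> space (gauss_bandit \<sigma> \<mu>'). \<mu>' (out X) > mu_top n \<mu>' - \<epsilon>} \<ge> 1 - \<delta>"
    using assms(6) mu'_in unfolding PAC_gauss_def by blast
  have top': "mu_top n \<mu>' \<ge> \<mu> i + d"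
  proof -
    have "\<mu>' i \<le> mu_top n \<mu>'" unfolding mu_top_def using assms(10) by (intro Max_ge) auto
    then show ?thesis by (simp add: \<mu>'_def)
  qed
  have outn: "out X < n" for X using alg unfolding batched_alg_def by simp
  have out_m': "out \<in> gauss_bandit \<sigma> \<mu>' \<rightarrow>\<^sub>M count_space UNIV"
    using alg unfolding batched_alg_def by (simp add: measurable_cong_sets[OF sets_gauss refl])
  have out_ev': "{X \<in> space (gauss_bandit \<sigma> \<mu>'). P (out X)} \<in> P'.events" for P
  proof -
    have "{X \<in> space (gauss_bandit \<sigma> \<mu>'). P (out X)} = out -` {j. P j} \<inter> space (gauss_bandit \<sigma> \<mu>')" by auto
    then show ?thesis using measurable_sets[OF out_m', of "{j. P j}"] by simp
  qed
  have E'_le: "measure (gauss_bandit \<sigma> \<mu>') E \<le> \<delta>"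
  proof -
    let ?G = "{X \<in> space (gauss_bandit \<sigma> \<mu>'). \<mu>' (out X) > mu_top n \<mu>' - \<epsilon>}"
    have "E \<subseteq> space (gauss_bandit \<sigma> \<mu>') - ?G"
    proof
      fix X assume X: "X \<in> E"
      then have "out X \<noteq> i" by (simp add: E_def)
      then have "\<mu>' (out X) = \<mu> (out X)" by (simp add: \<mu>'_def)
      also have "\<dots> \<le> mu_top n \<mu>" using mu_le_top[OF outn] .
      finally have "\<mu>' (out X) \<le> mu_top n \<mu>' - \<epsilon>" using top' d_eq by simp
      then show "X \<in> space (gauss_bandit \<sigma> \<mu>') - ?G" by simp
    qed
    then have "measure (gauss_bandit \<sigma> \<mu>') E \<le> measure (gauss_bandit \<sigma> \<mu>') (space (gauss_bandit \<sigma> \<mu>') - ?G)"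
      by (rule P'.finite_measure_mono[OF _ sets.compl_sets[OF out_ev']])
    also have "\<dots> = 1 - measure (gauss_bandit \<sigma> \<mu>') ?G"
      by (rule P'.prob_compl) (rule out_ev')
    finally show ?thesis using pac2 by simp
  qed
  show ?thesis
  proof (rule ccontr)
    define Tg where "Tg = {X \<in> space \<nu>. real (cumN A T X i) \<ge> \<theta>}"
    have Tg_ev: "Tg \<in> events" unfolding Tg_def using N_m by measurable
    assume "\<not> ?thesis"
    then have lt: "measure \<nu> Tg < 1/6" unfolding Tg_def \<theta>_def \<nu>_def by simp
    have B: "space \<nu> - Tg = {X. cumN A T X i \<le> K}"
    proof -
      have "\<theta> \<le> real N \<longleftrightarrow> \<not> N \<le> K" for N using NK[of N] by linarith
      then show ?thesis by (auto simp: Tg_def \<nu>_def)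
    qed
    have mB: "measure \<nu> (space \<nu> - Tg) > 5/6" using prob_compl[OF Tg_ev] lt by simp
    have "space \<nu> - Tg \<subseteq> E \<union> {X \<in> space \<nu>. out X = i}"
      using B by (auto simp: E_def \<nu>_def)
    then have "measure \<nu> (space \<nu> - Tg) \<le> measure \<nu> (E \<union> {X \<in> space \<nu>. out X = i})"
      by (intro finite_measure_mono) (auto intro: E_ev out_ev)
    also have "\<dots> \<le> measure \<nu> E + measure \<nu> {X \<in> space \<nu>. out X = i}"
      by (intro measure_Un_le E_ev out_ev)
    finally have pE: "measure \<nu> E > 2/3" using mB OutI assms(4) by simp
    show False
      by (rule arith_final[OF assms(3) assms(4) c_def v_ge v_le pE a_def])
         (use LB E'_le in simp)
  qed
qed

end
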